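(* Let $0<a<D$. For every $\omega\in\Omega$ and every nonnegative global solution $(s(t),m_1(t),m_2(t))$, $t\ge0$, of the random chemostat system $$s'(t)=(D+\psi(\xi^*(\theta_t\omega)))(s_{\mathrm{in}}-\alpha s(t))-c\mu(s(t))(m_1(t)+m_2(t))+rd\,m_1(t),$$ $$m_1'(t)=m_1(t)\big(-d-\alpha(D+\psi(\xi^*(\theta_t\omega)))+g\mu(s(t))-r_1m_1(t)-r_2m_2(t)-\alpha_1\big)+\alpha_2m_2(t),$$ $$m_2'(t)=m_2(t)\big(-d+g\mu(s(t))-r_1m_1(t)-r_2m_2(t)-\alpha_2\big)+\alpha_1m_1(t),$$ there exist $T>0$ and $s^*>0$ such that $s(t)\ge s^*$ for all $t\ge T$.
   Context: Let $\Omega$ be the set of continuous functions $\omega:\mathbb{R}\to\mathbb{R}$ with $\omega(0)=0$, with Borel $\sigma$-algebra and Wiener measure, and $\theta_t\omega(\cdot)=\omega(\cdot+t)-\omega(t)$ the Wiener shift. The Ornstein–Uhlenbeck process is $\xi^*(\theta_t\omega)=-\int_{-\infty}^0 e^{s}\,\theta_t\omega(s)\,ds$. For a constant $a>0$, $\psi(\xi)=\frac{2a}{\pi}\arctan(\xi)$. Parameters: $D>0$, $s_{\mathrm{in}}>0$, $\alpha>0$, $c>0$, $g\in(0,c]$, $r\in(0,1)$, $d>0$, $\alpha_1,\alpha_2\ge0$, $r_1,r_2\ge0$. The consumption function $\mu:[0,+\infty)\to[0,+\infty)$ is continuous, $\mu(0)=0$, $\mu(x)>0$ for $x>0$, and $\mu(x)\le1$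 for all $x\ge0$. *)

theory Defs
  imports "HOL-Analysis.Analysis"
begin

definition Omega :: "(real \<Rightarrow> real) set" where
  "Omega = {w. continuous_on UNIV w \<and> w 0 = 0}"

definition wshift :: "real \<Rightarrow> (real \<Rightarrow> real) \<Rightarrow> (real \<Rightarrow> real)" where
  "wshift t w = (\<lambda>s. w (s + t) - w t)"

text \<open>Stationary Ornstein--Uhlenbeck process xi*(w) = - int_{-inf}^0 e^s w(s) ds (Lebesgue integral).\<close>
definition xi_star :: "(real \<Rightarrow> real) \<Rightarrow> real" where
  "xi_star w = - (LINT s:{..0}|lborel. exp s * w s)"

definition psi :: "real \<Rightarrow> real \<Rightarrow> real" where
  "psi a x = 2 * a / pi * arctan x"

end

theory Submission
  imports Defs
begin

lemma incr_lemma: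
  fixes f f' :: "real \<Rightarrow> real"
  assumes d: "\<forall>x\<ge>0. (f has_real_derivative f' x) (at x within {0..})"
    and "0 \<le> u" "u \<le> t" and nn: "\<forall>x. u < x \<and> x < t \<longrightarrow> f' x \<ge> 0"
  shows "f u \<le> f t"
proof (rule DERIV_nonneg_imp_increasing_open[OF \<open>u \<le> t\<close>])
  fix x assume "u < x" "x < t"
  then have "x \<in> interior {0::real..}" using \<open>0 \<le> u\<close> by (simp add: interior_real_atLeast)
  then have "at x within {0..} = at x" by (rule at_within_interior)
  then show "\<exists>y. (f has_real_derivative y) (at x) \<and> 0 \<le> y"
  proof -
    have "(f has_real_derivative f' x) (at x within {0..})" using d \<open>u < x\<close> \<open>0 \<le> u\<close> by simp
    moreover have "f' x \<ge> 0" using nn \<open>u < x\<close> \<open>x < t\<close> by simp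
    ultimately show ?thesis using \<open>at x within {0..} = at x\<close> by auto
  qed
next
  have "continuous_on {0..} f"
    unfolding continuous_on_eq_continuous_within
    using d by (metis DERIV_continuous atLeast_iff)
  then show "continuous_on {u..t} f"
    by (rule continuous_on_subset) (use \<open>0 \<le> u\<close> in auto)
qed

theorem proposition4p1:
  fixes a D s_in alpha c g r d alpha1 alpha2 r1 r2 :: real
    and mu :: "real \<Rightarrow> real"
    and w :: "real \<Rightarrow> real"
    and s m1 m2 :: "real \<Rightarrow> real"
  assumes "0 < a" "a < D"
    and "s_in > 0" "alpha > 0" "c > 0" "0 < g" "g \<le> c" "0 < r" "r < 1" "d > 0"
    and "alpha1 \<ge> 0" "alpha2 \<ge> 0" "r1 \<ge> 0" "r2 \<ge> 0"
    and "continuous_on {0..} mu" "mu 0 = 0" "\<forall>x>0. mu x > 0" "\<forall>x\<ge>0. mu x \<le> 1"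
    and "w \<in> Omega"
    and "\<forall>t\<ge>0. s t \<ge> 0 \<and> m1 t \<ge> 0 \<and> m2 t \<ge> 0"
    and "\<forall>t\<ge>0. (s has_real_derivative
            ((D + psi a (xi_star (wshift t w))) * (s_in - alpha * s t)
             - c * mu (s t) * (m1 t + m2 t) + r * d * m1 t)) (at t within {0..})"
    and "\<forall>t\<ge>0. (m1 has_real_derivative
            (m1 t * (- d - alpha * (D + psi a (xi_star (wshift t w))) + g * mu (s t)
                     - r1 * m1 t - r2 * m2 t - alpha1) + alpha2 * m2 t)) (at t within {0..})"
    and "\<forall>t\<ge>0. (m2 has_real_derivative
            (m2 t * (- d + g * mu (s t) - r1 * m1 t - r2 * m2 t - alpha2) + alpha1 * m1 t))
            (at t within {0..})"
  shows "\<exists>T>0. \<exists>sstar>0. \<forall>t\<ge>T. s t \<ge> sstar"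
proof -
  note A = assms
  define E where "E t = D + psi a (xi_star (wshift t w))" for t
  have Eb: "D - a \<le> E t \<and> E t \<le> D + a" for t
  proof -
    have h1: "- (pi/2) < arctan (xi_star (wshift t w))" and h2: "arctan (xi_star (wshift t w)) < pi/2"
      using arctan_bounded by auto
    have k: "2 * a / pi \<ge> 0" using \<open>0 < a\<close> pi_gt_zero by simp
    have "(2 * a / pi) * (- (pi/2)) \<le> (2 * a / pi) * arctan (xi_star (wshift t w))"
       "(2 * a / pi) * arctan (xi_star (wshift t w)) \<le> (2 * a / pi) * (pi/2)"
      using mult_left_mono[OF less_imp_le[OF h1] k] mult_left_mono[OF less_imp_le[OF h2] k] by auto
    then have "- a \<le> psi a (xi_star (wshift t w)) \<and> psi a (xi_star (wshift t w)) \<le> a"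
      unfolding psi_def by simp
    then show ?thesis unfolding E_def by auto
  qed
  define K where "K = g * (D + a) * s_in"
  define \<kappa> where "\<kappa> = min (alpha * (D - a)) (d * (1 - r))"
  have kpos: "\<kappa> > 0" unfolding \<kappa>_def using A by auto
  have Kpos: "K > 0" unfolding K_def using A by auto
  define z where "z t = g * s t + c * (m1 t + m2 t)" for t
  define z' where "z' t = g * (E t * (s_in - alpha * s t) - c * mu (s t) * (m1 t + m2 t) + r * d * m1 t)
     + c * ((m1 t * (- d - alpha * E t + g * mu (s t) - r1 * m1 t - r2 * m2 t - alpha1) + alpha2 * m2 t)
     + (m2 t * (- d + g * mu (s t) - r1 * m1 t - r2 * m2 t - alpha2) + alpha1 * m1 t))" for t
  have zd: "\<forall>t\<ge>0. (z has_real_derivative z' t) (at t within {0..})"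
    unfolding z_def z'_def E_def using A(21,22,23)
    by (auto intro!: derivative_eq_intros)
  have z'b: "z' t \<le> K - \<kappa> * z t" if "t \<ge> 0" for t
  proof -
    obtain x y ss where xy: "x = m1 t" "y = m2 t" "ss = s t" by auto
    have nn: "x \<ge> 0" "y \<ge> 0" "ss \<ge> 0" using A(20) that xy by auto
    have e: "z' t = g * E t * s_in - g * E t * alpha * ss + g*r*d*x - c*d*x - c*alpha*E t*x - c*d*y
       - c*(x+y)*(r1*x+r2*y)"
      unfolding z'_def xy by (simp add: algebra_simps)
    have 1: "g * E t * s_in \<le> K" unfolding K_def using Eb[of t] A by simp
    have 2: "g * E t * alpha * ss \<ge> \<kappa> * g * ss"
    proof -
      have "\<kappa> \<le> E t * alpha" unfolding \<kappa>_def using Eb[of t] A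
        by (smt (verit) mult_right_mono mult.commute)
      then show ?thesis using nn A by (metis mult.assoc mult.commute mult_right_mono mult_nonneg_nonneg order_less_imp_le)
    qed
    have 3: "c*d*x - g*r*d*x \<ge> \<kappa> * c * x"
    proof -
      have "\<kappa> * c \<le> d*(1-r)*c" unfolding \<kappa>_def using A by (simp add: mult_right_mono)
      also have "\<dots> \<le> c*d - g*r*d"
      proof -
        have "g * (r*d) \<le> c * (r*d)" using mult_right_mono[OF \<open>g \<le> c\<close>, of "r*d"] A(8,10) by simp
        then show ?thesis by (simp add: algebra_simps)
      qed
      finally show ?thesis using nn by (metis left_diff_distrib mult_right_mono)
    qed
    have 4: "c*d*y \<ge> \<kappa> * c * y"
    proof -
      have "d * (1 - r) \<le> d" using A(8,10) by (simp add: algebra_simps)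
      then have "\<kappa> \<le> d" unfolding \<kappa>_def by linarith
      then show ?thesis using nn A by (simp add: mult_right_mono mult_left_mono mult.commute)
    qed
    have 5: "c*alpha*E t*x \<ge> 0" using A Eb[of t] nn by simp
    have 6: "c*(x+y)*(r1*x+r2*y) \<ge> 0" using A nn by simp
    have "z t = g * ss + c * x + c * y" unfolding z_def xy by (simp add: algebra_simps)
    then show ?thesis using e 1 2 3 4 5 6 by (simp add: algebra_simps)
  qed
  define M where "M = K / \<kappa> + z 0"
  have z0: "z 0 \<ge> 0" unfolding z_def using A by simp
  have zb: "z t \<le> M" if "t \<ge> 0" for t
  proof -
    define W where "W t = (z t - K / \<kappa>) * exp (\<kappa> * t)" for t
    define W' where "W' t = z' t * exp (\<kappa> * t) + (z t - K / \<kappa>) * (exp (\<kappa> * t) * \<kappa>)" for t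
    have Wd: "\<forall>t\<ge>0. ((\<lambda>t. - W t) has_real_derivative - W' t) (at t within {0..})"
      unfolding W_def W'_def using zd
      by (auto intro!: derivative_eq_intros)
    have "- W 0 \<le> - W t"
    proof (rule incr_lemma[OF Wd _ that])
      show "\<forall>x. 0 < x \<and> x < t \<longrightarrow> 0 \<le> - W' x"
      proof (intro allI impI)
        fix x assume "0 < x \<and> x < t"
        then have "z' x \<le> K - \<kappa> * z x" using z'b by simp
        moreover have "(z x - K/\<kappa>) * \<kappa> = \<kappa> * z x - K" using kpos by (simp add: field_simps)
        ultimately have "z' x + (z x - K/\<kappa>) * \<kappa> \<le> 0" by linarith
        then have "(z' x + (z x - K/\<kappa>) * \<kappa>) * exp (\<kappa> * x) \<le> 0"
          by (simp add: mult_nonpos_nonneg)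
        moreover have "W' x = (z' x + (z x - K/\<kappa>) * \<kappa>) * exp (\<kappa> * x)"
          unfolding W'_def by (simp only: algebra_simps)
        ultimately show "0 \<le> - W' x" by linarith
      qed
    qed simp
    then have "(z t - K / \<kappa>) * exp (\<kappa> * t) \<le> z 0 - K / \<kappa>" unfolding W_def by simp
    moreover have "exp (\<kappa> * t) \<ge> 1" using kpos that by simp
    ultimately show ?thesis unfolding M_def using z0 kpos Kpos
      by (smt (verit) divide_pos_pos mult_le_cancel_left1 mult.commute)
  qed
  have mb: "c * (m1 t + m2 t) \<le> M" if "t \<ge> 0" for t
    using zb[OF that] A that unfolding z_def by (smt (verit) mult_nonneg_nonneg)
  have Mnn: "M \<ge> 0" using mb[of 0] A by (smt (verit) mult_nonneg_nonneg)
  define \<epsilon> where "\<epsilon> = (D - a) * s_in / (4 * (M + 1))"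
  have epos: "\<epsilon> > 0" unfolding \<epsilon>_def using A Mnn by simp
  obtain \<delta> where dpos: "\<delta> > 0" and dmu: "\<forall>x\<in>{0..}. dist x 0 < \<delta> \<longrightarrow> dist (mu x) (mu 0) < \<epsilon>"
    using A(15) epos unfolding continuous_on_iff by (metis atLeast_iff order_refl)
  define \<delta>' where "\<delta>' = min (\<delta>/2) (s_in / (2 * alpha))"
  have d'pos: "\<delta>' > 0" unfolding \<delta>'_def using dpos A by simp
  define \<beta> where "\<beta> = (D - a) * s_in / 4"
  have bpos: "\<beta> > 0" unfolding \<beta>_def using A by simp
  have sd: "\<forall>t\<ge>0. (s has_real_derivative
            (E t * (s_in - alpha * s t) - c * mu (s t) * (m1 t + m2 t) + r * d * m1 t)) (at t within {0..})"
    using A(21) unfolding E_def by simp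
  have sdb: "E t * (s_in - alpha * s t) - c * mu (s t) * (m1 t + m2 t) + r * d * m1 t \<ge> \<beta>"
    if "t \<ge> 0" "s t < \<delta>'" for t
  proof -
    have st: "0 \<le> s t" using A that by simp
    have "s t < \<delta>" using that d'pos unfolding \<delta>'_def by simp
    then have "mu (s t) < \<epsilon>" using dmu st A(16) by (force simp: dist_real_def)
    moreover have "mu (s t) \<ge> 0" proof -
      have "s t = 0 \<or> s t > 0" using st by auto
      then show ?thesis using A(16,17) by (auto intro: less_imp_le)
    qed
    ultimately have mu1: "mu (s t) \<le> \<epsilon>" and mu2: "mu (s t) \<ge> 0" by auto
    have X: "c * (m1 t + m2 t) \<ge> 0" using A(5,20) that by simp
    have "mu (s t) * (c * (m1 t + m2 t)) \<le> \<epsilon> * M"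
      using mult_mono[OF mu1 mb[OF that(1)] _ X] epos by simp
    also have "\<epsilon> * M \<le> \<beta>" unfolding \<epsilon>_def \<beta>_def using A Mnn
      by (simp add: field_simps mult_left_mono)
    finally have 1: "c * mu (s t) * (m1 t + m2 t) \<le> \<beta>" by (simp add: algebra_simps)
    have "alpha * s t \<le> s_in / 2" using that A unfolding \<delta>'_def by (simp add: field_simps)
    then have "s_in - alpha * s t \<ge> s_in / 2" by simp
    then have "E t * (s_in - alpha * s t) \<ge> (D - a) * (s_in / 2)"
      using mult_mono[of "D - a" "E t" "s_in / 2" "s_in - alpha * s t"] Eb[of t] A(2,3) by simp
    moreover have "r * d * m1 t \<ge> 0" using A that by simp
    ultimately show ?thesis using 1 unfolding \<beta>_def by simp
  qed
  have key: "s t \<ge> s u + \<beta> * (t - u)" if "0 \<le> u" "u \<le> t" "\<forall>x. u < x \<and> x < t \<longrightarrow> s x < \<delta>'" for u t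
  proof -
    have hd: "\<forall>x\<ge>0. ((\<lambda>x. s x - \<beta> * x) has_real_derivative
       (E x * (s_in - alpha * s x) - c * mu (s x) * (m1 x + m2 x) + r * d * m1 x) - \<beta>) (at x within {0..})"
      using sd by (auto intro!: derivative_eq_intros)
    have "s u - \<beta> * u \<le> s t - \<beta> * t"
      by (rule incr_lemma[OF hd that(1,2)]) (use sdb that in force)
    then show ?thesis by (simp add: algebra_simps)
  qed
  show ?thesis
  proof (intro exI conjI allI impI)
    show "\<delta>' / \<beta> > 0" using d'pos bpos by simp
    show "\<delta>' > 0" by (rule d'pos)
    fix t assume tT: "\<delta>' / \<beta> \<le> t"
    have t0: "t \<ge> 0" using tT d'pos bpos by (smt (verit) divide_pos_pos)
    show "\<delta>' \<le> s t"
    proof (rule ccontr)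
      assume neg: "\<not> \<delta>' \<le> s t"
      define S where "S = {v\<in>{0..t}. s v \<ge> \<delta>'}"
      show False
      proof (cases "S = {}")
        case True
        have "\<forall>x. 0 < x \<and> x < t \<longrightarrow> s x < \<delta>'"
        proof (intro allI impI)
          fix x assume x: "0 < x \<and> x < t"
          have "x \<notin> S" using True by simp
          then show "s x < \<delta>'" using x unfolding S_def by auto
        qed
        from key[OF order_refl t0 this] have "s t \<ge> s 0 + \<beta> * t" by simp
        moreover have "\<beta> * t \<ge> \<delta>'" using tT bpos by (simp add: field_simps)
        ultimately show False using neg A by (smt (verit))
      next
        case False
        have cs: "continuous_on {0..t} s"
        proof -
          have "continuous_on {0..} s"
            unfolding continuous_on_eq_continuous_within
            using sd by (metis DERIV_continuous atLeast_iff)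
          then show ?thesis by (rule continuous_on_subset) auto
        qed
        have "S = {0..t} \<inter> s -` {\<delta>'..}" unfolding S_def by auto
        then have "closed S"
          using continuous_closed_preimage[OF cs closed_atLeastAtMost closed_atLeast[of "\<delta>'"]]
          by simp
        moreover have "bdd_above S" unfolding S_def by (auto intro!: bdd_aboveI[of _ t])
        ultimately have v: "Sup S \<in> S" using False closed_contains_Sup by blast
        have "\<forall>x. Sup S < x \<and> x < t \<longrightarrow> s x < \<delta>'"
        proof (intro allI impI)
          fix x assume x: "Sup S < x \<and> x < t"
          have "x \<notin> S" using cSup_upper[OF _ \<open>bdd_above S\<close>, of x] x by auto
          moreover have "x \<ge> 0" using v x unfolding S_def by auto
          ultimately show "s x < \<delta>'" using x unfolding S_def by auto
        qed
        from key[OF _ _ this] v have "s t \<ge> s (Sup S) + \<beta> * (t - Sup S)" unfolding S_def by auto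
        moreover have "\<beta> * (t - Sup S) \<ge> 0" using v bpos unfolding S_def by auto
        ultimately show False using v neg unfolding S_def by auto
      qed
    qed
  qed
qed

end
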